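(* Let $E$ be a finite nonempty set. (1) For every CAR mechanism $\pi$ on $E$ and every $\epsilon>0$ there exists a rational CAR mechanism $\pi'$ on $E$ with $\|\pi-\pi'\|<\epsilon$. (2) Every CAR mechanism on $E$ is exactly equal to a finite mixture of extreme CAR mechanisms, each of which is rational (hence generated by a uniform multicover). Equivalently, every CAR mechanism arises from the following procedure for suitable choices of finitely many uniform multicovers $\mathcal C_1,\dots,\mathcal C_p$ of $E$ (of heights $k_1,\dots,k_p$) and a probability vector $(\lambda_1,\dots,\lambda_p)$: given $x\in E$, choose index $j$ with probability $\lambda_j$ independently of $x$, then choose uniformly at random (probability $1/k_j$ each, counting multiplicity) one of the $k_j$ sets of $\mathcal C_j$ containing $x$. *)

theory Defs
  imports Complex_Main "HOL-Library.Multiset"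
begin

text \<open>A CAR (coarsening at random) mechanism on a finite set E: the probability
 pi(A|x) of reporting the nonempty set A \<subseteq> E when the true value is x \<in> A depends
 only on A; we represent it by the function A \<mapsto> pi(A).\<close>
definition car_mech :: "'a set \<Rightarrow> ('a set \<Rightarrow> real) \<Rightarrow> bool" where
  "car_mech E \<pi> \<longleftrightarrow>
     (\<forall>A. (A \<subseteq> E \<and> A \<noteq> {} \<longrightarrow> \<pi> A \<ge> 0) \<and> (\<not> (A \<subseteq> E \<and> A \<noteq> {}) \<longrightarrow> \<pi> A = 0)) \<and>
     (\<forall>x\<in>E. (\<Sum>A\<in>{A. A \<subseteq> E \<and> x \<in> A}. \<pi> A) = 1)"

definition rational_car :: "'a set \<Rightarrow> ('a set \<Rightarrow> real) \<Rightarrow> bool" where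
  "rational_car E \<pi> \<longleftrightarrow> car_mech E \<pi> \<and> (\<forall>A. \<pi> A \<in> \<rat>)"

definition extreme_car :: "'a set \<Rightarrow> ('a set \<Rightarrow> real) \<Rightarrow> bool" where
  "extreme_car E \<pi> \<longleftrightarrow> car_mech E \<pi> \<and>
     \<not> (\<exists>\<pi>1 \<pi>2 t. car_mech E \<pi>1 \<and> car_mech E \<pi>2 \<and> \<pi>1 \<noteq> \<pi>2 \<and> 0 < t \<and> t < 1 \<and>
          \<pi> = (\<lambda>A. t * \<pi>1 A + (1 - t) * \<pi>2 A))"

text \<open>Distance between mechanisms (l1-norm over the coordinates A \<subseteq> E; all norms
 on this finite-dimensional space are equivalent).\<close>
definition car_dist :: "'a set \<Rightarrow> ('a set \<Rightarrow> real) \<Rightarrow> ('a set \<Rightarrow> real) \<Rightarrow> real" where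
  "car_dist E \<pi> \<pi>' = (\<Sum>A\<in>Pow E. \<bar>\<pi> A - \<pi>' A\<bar>)"

definition uniform_multicover :: "'a set \<Rightarrow> 'a set multiset \<Rightarrow> nat \<Rightarrow> bool" where
  "uniform_multicover E C k \<longleftrightarrow> 0 < k \<and>
     (\<forall>A\<in>#C. A \<subseteq> E \<and> A \<noteq> {}) \<and>
     (\<forall>x\<in>E. size (filter_mset (\<lambda>A. x \<in> A) C) = k)"

text \<open>The mechanism generated by a uniform multicover C of height k:
 given x, choose uniformly one of the k members of C containing x.\<close>
definition generated_mech :: "'a set multiset \<Rightarrow> nat \<Rightarrow> 'a set \<Rightarrow> real" where
  "generated_mech C k A = real (count C A) / real k"

end

theory Submission
  imports Defs
begin


lemma rat_solution:
  fixes V :: "'v set" and Eqs :: "(('v \<Rightarrow> real) \<times> real) set"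
  assumes "finite V"
   and "\<forall>(a,b)\<in>Eqs. b \<in> \<rat> \<and> (\<forall>u\<in>V. a u \<in> \<rat>)"
   and "\<forall>(a,b)\<in>Eqs. (\<Sum>u\<in>V. a u * y u) = b"
  shows "\<exists>z. (\<forall>u\<in>V. z u \<in> \<rat>) \<and> (\<forall>(a,b)\<in>Eqs. (\<Sum>u\<in>V. a u * z u) = b)"
  using assms
proof (induction V arbitrary: Eqs y rule: finite_induct)
  case empty
  then show ?case by auto
next
  case (insert v V)
  show ?case
  proof (cases "\<forall>(a,b)\<in>Eqs. a v = 0")
    case True
    have "\<forall>(a,b)\<in>Eqs. (\<Sum>u\<in>V. a u * y u) = b"
    proof clarify
      fix a b assume ab: "(a,b) \<in> Eqs"
      then have "a v * y v + (\<Sum>u\<in>V. a u * y u) = b" "a v = 0"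
        using insert.prems(2) True insert.hyps by fastforce+
      then show "(\<Sum>u\<in>V. a u * y u) = b" by simp
    qed
    moreover have "\<forall>(a,b)\<in>Eqs. b \<in> \<rat> \<and> (\<forall>u\<in>V. a u \<in> \<rat>)"
      using insert.prems(1) by auto
    ultimately obtain z where z: "\<forall>u\<in>V. z u \<in> \<rat>" "\<forall>(a,b)\<in>Eqs. (\<Sum>u\<in>V. a u * z u) = b"
      using insert.IH by blast
    define z' where "z' = z(v := 0)"
    have s: "(\<Sum>u\<in>V. a u * z' u) = (\<Sum>u\<in>V. a u * z u)" for a
      using insert.hyps(2) by (intro sum.cong) (auto simp: z'_def)
    show ?thesis
      apply (rule exI[of _ z'])
      using z True insert.hyps s by (auto simp: z'_def)
  next
    case False
    then obtain a0 b0 where ab0: "(a0,b0) \<in> Eqs" "a0 v \<noteq> 0" by auto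
    define Eqs' where "Eqs' = (\<lambda>(a,b). (\<lambda>u. a u - a v * a0 u / a0 v, b - a v * b0 / a0 v)) ` Eqs"
    have r1: "\<forall>(a,b)\<in>Eqs'. b \<in> \<rat> \<and> (\<forall>u\<in>V. a u \<in> \<rat>)"
    proof (clarsimp simp: Eqs'_def)
      fix a b assume "(a,b) \<in> Eqs"
      then have "b \<in> \<rat>" "b0 \<in> \<rat>" "a v \<in> \<rat>" "a0 v \<in> \<rat>" "\<forall>u\<in>V. a u \<in> \<rat> \<and> a0 u \<in> \<rat>"
        using insert.prems(1) ab0 by fastforce+
      then show "b - a v * b0 / a0 v \<in> \<rat> \<and> (\<forall>u\<in>V. a u - a v * a0 u / a0 v \<in> \<rat>)"
        by auto
    qed
    have r2: "\<forall>(a,b)\<in>Eqs'. (\<Sum>u\<in>V. a u * y u) = b"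
    proof (clarsimp simp: Eqs'_def)
      fix a b assume "(a,b) \<in> Eqs"
      then have e1: "a v * y v + (\<Sum>u\<in>V. a u * y u) = b"
        and e0: "a0 v * y v + (\<Sum>u\<in>V. a0 u * y u) = b0"
        using insert.prems(2) ab0 insert.hyps by (fastforce simp: sum.insert)+
      have "(\<Sum>u\<in>V. (a u - a v * a0 u / a0 v) * y u)
           = (\<Sum>u\<in>V. a u * y u) - a v / a0 v * (\<Sum>u\<in>V. a0 u * y u)"
        by (simp add: algebra_simps sum_subtractf sum_distrib_left)
      also have "\<dots> = b - a v * b0 / a0 v"
        using ab0(2) by (simp add: e1[symmetric] e0[symmetric] field_simps)
      finally show "(\<Sum>u\<in>V. (a u - a v * a0 u / a0 v) * y u) = b - a v * b0 / a0 v" .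
    qed
    obtain z where z: "\<forall>u\<in>V. z u \<in> \<rat>" "\<forall>(a,b)\<in>Eqs'. (\<Sum>u\<in>V. a u * z u) = b"
      using insert.IH[OF r1 r2] by blast
    define z' where "z' = z(v := (b0 - (\<Sum>u\<in>V. a0 u * z u)) / a0 v)"
    have s: "(\<Sum>u\<in>V. a u * z' u) = (\<Sum>u\<in>V. a u * z u)" for a
      using insert.hyps(2) by (intro sum.cong) (auto simp: z'_def)
    have q: "\<forall>u\<in>insert v V. z' u \<in> \<rat>"
    proof -
      have "b0 \<in> \<rat>" "a0 v \<in> \<rat>" "\<forall>u\<in>V. a0 u \<in> \<rat>"
        using insert.prems(1) ab0 by fastforce+
      then have "(\<Sum>u\<in>V. a0 u * z u) \<in> \<rat>" using z(1) by (intro Rats_sum Rats_mult) auto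
      then have "(b0 - (\<Sum>u\<in>V. a0 u * z u)) / a0 v \<in> \<rat>" using \<open>b0 \<in> \<rat>\<close> \<open>a0 v \<in> \<rat>\<close>
        by (intro Rats_divide Rats_diff) auto
      then show ?thesis using z(1) insert.hyps(2) by (auto simp: z'_def)
    qed
    have "\<forall>(a,b)\<in>Eqs. (\<Sum>u\<in>insert v V. a u * z' u) = b"
    proof clarify
      fix a b assume ab: "(a,b) \<in> Eqs"
      then have e: "(\<Sum>u\<in>V. (a u - a v * a0 u / a0 v) * z u) = b - a v * b0 / a0 v"
        using z(2) unfolding Eqs'_def by fastforce
      have "(\<Sum>u\<in>V. (a u - a v * a0 u / a0 v) * z u)
           = (\<Sum>u\<in>V. a u * z u) - a v / a0 v * (\<Sum>u\<in>V. a0 u * z u)"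
        by (simp add: algebra_simps sum_subtractf sum_distrib_left)
      with e have e': "(\<Sum>u\<in>V. a u * z u) = b - a v * b0 / a0 v + a v / a0 v * (\<Sum>u\<in>V. a0 u * z u)"
        by simp
      have "(\<Sum>u\<in>insert v V. a u * z' u) = a v * z' v + (\<Sum>u\<in>V. a u * z u)"
        using insert.hyps s by (simp add: sum.insert)
      also have "\<dots> = b" using ab0(2) unfolding e' by (simp add: z'_def field_simps)
      finally show "(\<Sum>u\<in>insert v V. a u * z' u) = b" .
    qed
    with q show ?thesis by blast
  qed
qed


definition car_tight :: "'a set \<Rightarrow> ('a set \<Rightarrow> real) \<Rightarrow> bool" where
  "car_tight E \<pi> \<longleftrightarrow> \<not> (\<exists>d::'a set \<Rightarrow> real. d \<noteq> (\<lambda>_. 0) \<and> (\<forall>A. \<pi> A = 0 \<longrightarrow> d A = 0) \<and>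
      (\<forall>x\<in>E. (\<Sum>A\<in>{A. A \<subseteq> E \<and> x \<in> A}. d A) = 0))"

lemma car_nonneg: "car_mech E \<pi> \<Longrightarrow> \<pi> A \<ge> 0"
  unfolding car_mech_def by (metis order_refl)

lemma car_zero: "car_mech E \<pi> \<Longrightarrow> \<not> (A \<subseteq> E \<and> A \<noteq> {}) \<Longrightarrow> \<pi> A = 0"
  unfolding car_mech_def by blast

lemma car_sum: "car_mech E \<pi> \<Longrightarrow> x \<in> E \<Longrightarrow> (\<Sum>A\<in>{A. A \<subseteq> E \<and> x \<in> A}. \<pi> A) = 1"
  unfolding car_mech_def by blast

lemma car_le1:
  assumes "finite E" "car_mech E \<pi>" shows "\<pi> A \<le> 1"
proof (cases "A \<subseteq> E \<and> A \<noteq> {}")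
  case True
  then obtain x where x: "x \<in> A" "x \<in> E" by blast
  have "\<pi> A \<le> (\<Sum>B\<in>{B. B \<subseteq> E \<and> x \<in> B}. \<pi> B)"
    using x True assms by (intro member_le_sum) (auto simp: car_nonneg)
  also have "\<dots> = 1" using car_sum[OF assms(2) x(2)] .
  finally show ?thesis .
next
  case False then show ?thesis using car_zero[OF assms(2)] by simp
qed

lemma sum_conv:
  fixes f :: "'a set \<Rightarrow> real"
  assumes "finite E" "V \<subseteq> Pow E" "\<forall>A. A \<notin> V \<longrightarrow> f A = 0"
  shows "(\<Sum>A\<in>{A. A \<subseteq> E \<and> x \<in> A}. f A) = (\<Sum>A\<in>V. (if x \<in> A then 1 else 0) * f A)"
proof -
  have "{A. A \<subseteq> E \<and> x \<in> A} = {A \<in> Pow E. x \<in> A}" by auto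
  then have "(\<Sum>A\<in>{A. A \<subseteq> E \<and> x \<in> A}. f A) = (\<Sum>A\<in>Pow E. if x \<in> A then f A else 0)"
    using assms(1) by (simp add: sum.inter_filter[symmetric])
  also have "\<dots> = (\<Sum>A\<in>V. if x \<in> A then f A else 0)"
    using assms by (intro sum.mono_neutral_right) auto
  also have "\<dots> = (\<Sum>A\<in>V. (if x \<in> A then 1 else 0) * f A)"
    by (intro sum.cong) auto
  finally show ?thesis .
qed

lemma tight_extreme:
  assumes "car_mech E \<pi>" "car_tight E \<pi>"
  shows "extreme_car E \<pi>"
  unfolding extreme_car_def
proof (intro conjI notI assms(1))
  assume "\<exists>\<pi>1 \<pi>2 t. car_mech E \<pi>1 \<and> car_mech E \<pi>2 \<and> \<pi>1 \<noteq> \<pi>2 \<and> 0 < t \<and> t < 1 \<and>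
          \<pi> = (\<lambda>A. t * \<pi>1 A + (1 - t) * \<pi>2 A)"
  then obtain \<pi>1 \<pi>2 t where h: "car_mech E \<pi>1" "car_mech E \<pi>2" "\<pi>1 \<noteq> \<pi>2" "0 < t" "t < 1"
    "\<pi> = (\<lambda>A. t * \<pi>1 A + (1 - t) * \<pi>2 A)" by blast
  define d where "d = (\<lambda>A. \<pi>1 A - \<pi>2 A)"
  have "d \<noteq> (\<lambda>_. 0)"
  proof
    assume "d = (\<lambda>_. 0)"
    then have "\<pi>1 A = \<pi>2 A" for A unfolding d_def by (metis eq_iff_diff_eq_0)
    then show False using h(3) by blast
  qed
  moreover have "\<forall>A. \<pi> A = 0 \<longrightarrow> d A = 0"
  proof clarify
    fix A assume "\<pi> A = 0"
    then have "t * \<pi>1 A + (1 - t) * \<pi>2 A = 0" using h(6) by simp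
    moreover have "t * \<pi>1 A \<ge> 0" "(1 - t) * \<pi>2 A \<ge> 0"
      using h(4,5) car_nonneg[OF h(1)] car_nonneg[OF h(2)] by auto
    ultimately have "t * \<pi>1 A = 0" "(1 - t) * \<pi>2 A = 0" by linarith+
    then show "d A = 0" using h(4,5) by (simp add: d_def)
  qed
  moreover have "\<forall>x\<in>E. (\<Sum>A\<in>{A. A \<subseteq> E \<and> x \<in> A}. d A) = 0"
    using car_sum[OF h(1)] car_sum[OF h(2)] by (simp add: d_def sum_subtractf)
  ultimately show False using assms(2) unfolding car_tight_def by blast
qed

lemma tight_rational:
  assumes fin: "finite E" and car: "car_mech E \<pi>" and t: "car_tight E \<pi>"
  shows "\<pi> A \<in> \<rat>"
proof -
  define V where "V = {A. A \<subseteq> E \<and> \<pi> A \<noteq> 0}"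
  have V: "finite V" "V \<subseteq> Pow E" using fin unfolding V_def by auto
  have out: "\<forall>A. A \<notin> V \<longrightarrow> \<pi> A = 0" using car_zero[OF car] unfolding V_def by auto
  define Eqs where "Eqs = (\<lambda>x. ((\<lambda>A::'a set. if x \<in> A then 1 else (0::real)), (1::real))) ` E"
  have r: "\<forall>(a,b)\<in>Eqs. b \<in> \<rat> \<and> (\<forall>u\<in>V. a u \<in> \<rat>)" unfolding Eqs_def by auto
  have s: "\<forall>(a,b)\<in>Eqs. (\<Sum>u\<in>V. a u * \<pi> u) = b"
    unfolding Eqs_def using car_sum[OF car] sum_conv[OF fin V(2) out] by auto
  obtain z where z: "\<forall>u\<in>V. z u \<in> \<rat>" "\<forall>(a,b)\<in>Eqs. (\<Sum>u\<in>V. a u * z u) = b"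
    using rat_solution[OF V(1) r s] by blast
  define z' where "z' = (\<lambda>A. if A \<in> V then z A else 0)"
  have out': "\<forall>A. A \<notin> V \<longrightarrow> z' A = 0" unfolding z'_def by auto
  have zs: "(\<Sum>A\<in>{A. A \<subseteq> E \<and> x \<in> A}. z' A) = 1" if "x \<in> E" for x
  proof -
    have "(\<Sum>A\<in>{A. A \<subseteq> E \<and> x \<in> A}. z' A) = (\<Sum>A\<in>V. (if x \<in> A then 1 else 0) * z' A)"
      using sum_conv[OF fin V(2) out'] .
    also have "\<dots> = (\<Sum>A\<in>V. (if x \<in> A then 1 else 0) * z A)"
      by (intro sum.cong) (auto simp: z'_def)
    also have "\<dots> = 1" using z(2) that unfolding Eqs_def by auto
    finally show ?thesis .
  qed
  define d where "d = (\<lambda>A. \<pi> A - z' A)"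
  have "\<forall>A. \<pi> A = 0 \<longrightarrow> d A = 0"
    unfolding d_def z'_def V_def by auto
  moreover have "\<forall>x\<in>E. (\<Sum>A\<in>{A. A \<subseteq> E \<and> x \<in> A}. d A) = 0"
    using car_sum[OF car] zs by (simp add: d_def sum_subtractf)
  ultimately have "d = (\<lambda>_. 0)" using t unfolding car_tight_def by blast
  then have "\<pi> A = z' A" unfolding d_def by (metis eq_iff_diff_eq_0)
  then show ?thesis using z(1) by (simp add: z'_def)
qed


lemma sum_zero_neg:
  fixes f :: "'b \<Rightarrow> real"
  assumes "finite S" "sum f S = 0" "a \<in> S" "f a \<noteq> 0"
  shows "\<exists>b\<in>S. f b < 0"
proof (rule ccontr)
  assume "\<not> ?thesis"
  then have "\<forall>b\<in>S. f b \<ge> 0" by force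
  then have "\<forall>b\<in>S. f b = 0" using assms(1,2) sum_nonneg_eq_0_iff by blast
  then show False using assms(3,4) by blast
qed

lemma push:
  assumes fin: "finite E" and car: "car_mech E \<pi>"
    and dsupp: "\<forall>A. \<pi> A = 0 \<longrightarrow> d A = 0"
    and dsum: "\<forall>x\<in>E. (\<Sum>A\<in>{A. A \<subseteq> E \<and> x \<in> A}. d A) = 0"
    and neg: "d A0 < 0"
  shows "\<exists>t>0. car_mech E (\<lambda>A. \<pi> A + t * d A) \<and>
     {A. A \<subseteq> E \<and> \<pi> A + t * d A \<noteq> 0} \<subset> {A. A \<subseteq> E \<and> \<pi> A \<noteq> 0}"
proof -
  have nz: "d A \<noteq> 0 \<Longrightarrow> \<pi> A \<noteq> 0" for A using dsupp by blast
  have pos: "d A \<noteq> 0 \<Longrightarrow> \<pi> A > 0" for A using nz[of A] car_nonneg[OF car, of A] by linarith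
  have sub: "d A \<noteq> 0 \<Longrightarrow> A \<subseteq> E" for A using nz car_zero[OF car] by blast
  define N where "N = {A. A \<subseteq> E \<and> d A < 0}"
  have Nfin: "finite N" using fin unfolding N_def by auto
  have A0N: "A0 \<in> N" using neg sub[of A0] unfolding N_def by auto
  define t where "t = Min ((\<lambda>A. \<pi> A / (- d A)) ` N)"
  have tin: "t \<in> (\<lambda>A. \<pi> A / (- d A)) ` N" unfolding t_def using Nfin A0N by (intro Min_in) auto
  then obtain A1 where A1: "A1 \<in> N" "t = \<pi> A1 / (- d A1)" by blast
  have tle: "t \<le> \<pi> A / (- d A)" if "A \<in> N" for A
    unfolding t_def using Nfin that by (intro Min_le) auto
  have tpos: "t > 0"
  proof -
    have "- d A1 > 0" "\<pi> A1 > 0" using A1(1) pos[of A1] unfolding N_def by auto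
    then show ?thesis unfolding A1(2) by (rule divide_pos_pos[rotated])
  qed
  have nn: "\<pi> A + t * d A \<ge> 0" for A
  proof (cases "d A < 0")
    case True
    then have "A \<in> N" using sub[of A] unfolding N_def by auto
    then have "t \<le> \<pi> A / (- d A)" by (rule tle)
    moreover have "- d A > 0" using True by simp
    ultimately have "t * (- d A) \<le> \<pi> A" by (metis pos_le_divide_eq)
    then show ?thesis by simp
  next
    case False
    then show ?thesis using tpos car_nonneg[OF car, of A] by simp
  qed
  have c: "car_mech E (\<lambda>A. \<pi> A + t * d A)"
    unfolding car_mech_def
  proof (intro conjI allI impI ballI)
    fix A show "0 \<le> \<pi> A + t * d A" by (rule nn)
  next
    fix A assume "\<not> (A \<subseteq> E \<and> A \<noteq> {})"
    then have "\<pi> A = 0" using car_zero[OF car] by blast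
    then show "\<pi> A + t * d A = 0" using dsupp by simp
  next
    fix x assume "x \<in> E"
    then show "(\<Sum>A\<in>{A. A \<subseteq> E \<and> x \<in> A}. \<pi> A + t * d A) = 1"
      using car_sum[OF car] dsum by (simp add: sum.distrib sum_distrib_left[symmetric])
  qed
  have z1: "\<pi> A1 + t * d A1 = 0" using A1 unfolding N_def by auto
  have "{A. A \<subseteq> E \<and> \<pi> A + t * d A \<noteq> 0} \<subset> {A. A \<subseteq> E \<and> \<pi> A \<noteq> 0}"
  proof
    show "{A. A \<subseteq> E \<and> \<pi> A + t * d A \<noteq> 0} \<subseteq> {A. A \<subseteq> E \<and> \<pi> A \<noteq> 0}"
      using dsupp by auto
    have "A1 \<in> {A. A \<subseteq> E \<and> \<pi> A \<noteq> 0}" using A1 nz unfolding N_def by auto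
    then show "{A. A \<subseteq> E \<and> \<pi> A + t * d A \<noteq> 0} \<noteq> {A. A \<subseteq> E \<and> \<pi> A \<noteq> 0}"
      using z1 by blast
  qed
  then show ?thesis using c tpos by blast
qed

lemma sum_list_scale:
  "(\<Sum>(w,\<sigma>)\<leftarrow>map (\<lambda>(w,\<sigma>). (c * w, \<sigma>)) L. w * \<sigma> A) = c * (\<Sum>(w,\<sigma>)\<leftarrow>L. w * (\<sigma> A::real))"
  by (induction L) (auto simp: algebra_simps)

lemma sum_list_scale_fst:
  "sum_list (map fst (map (\<lambda>(w,\<sigma>). (c * w, \<sigma>)) L)) = c * sum_list (map fst (L :: (real \<times> 'b) list))"
  by (induction L) (auto simp: algebra_simps)

lemma decomp:
  assumes fin: "finite E"
  shows "car_mech E \<pi> \<Longrightarrow> \<exists>L. L \<noteq> [] \<and> (\<forall>(w,\<sigma>)\<in>set L. w \<ge> 0 \<and> car_mech E \<sigma> \<and> car_tight E \<sigma>)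
     \<and> sum_list (map fst L) = 1 \<and> (\<forall>A. \<pi> A = (\<Sum>(w,\<sigma>)\<leftarrow>L. w * \<sigma> A))"
proof (induction "card {A. A \<subseteq> E \<and> \<pi> A \<noteq> 0}" arbitrary: \<pi> rule: less_induct)
  case less
  note car = less.prems
  show ?case
  proof (cases "car_tight E \<pi>")
    case True
    then show ?thesis using car by (intro exI[of _ "[(1, \<pi>)]"]) auto
  next
    case False
    then obtain d :: "'a set \<Rightarrow> real" where d: "d \<noteq> (\<lambda>_. 0)" "\<forall>A. \<pi> A = 0 \<longrightarrow> d A = 0"
      "\<forall>x\<in>E. (\<Sum>A\<in>{A. A \<subseteq> E \<and> x \<in> A}. d A) = 0"
      unfolding car_tight_def by blast
    obtain A0 where A0: "d A0 \<noteq> 0" using d(1) by auto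
    then have "\<pi> A0 \<noteq> 0" using d(2) by blast
    then have "A0 \<subseteq> E" "A0 \<noteq> {}" using car_zero[OF car] by blast+
    then obtain x where x: "x \<in> A0" "x \<in> E" by blast
    have fS: "finite {A. A \<subseteq> E \<and> x \<in> A}" using fin by auto
    have A0S: "A0 \<in> {A. A \<subseteq> E \<and> x \<in> A}" using x \<open>A0 \<subseteq> E\<close> by auto
    obtain B1 where "d B1 < 0"
      using sum_zero_neg[OF fS d(3)[rule_format, OF x(2)] A0S A0] by blast
    obtain B2 where "- d B2 < 0"
      using sum_zero_neg[of _ "\<lambda>A. - d A", OF fS _ A0S] d(3) x(2) A0 by (auto simp: sum_negf)
    obtain a where a: "a > 0" "car_mech E (\<lambda>A. \<pi> A + a * d A)"
      "{A. A \<subseteq> E \<and> \<pi> A + a * d A \<noteq> 0} \<subset> {A. A \<subseteq> E \<and> \<pi> A \<noteq> 0}"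
      using push[OF fin car d(2) d(3) \<open>d B1 < 0\<close>] by blast
    have d2: "\<forall>A. \<pi> A = 0 \<longrightarrow> - d A = 0" "\<forall>x\<in>E. (\<Sum>A\<in>{A. A \<subseteq> E \<and> x \<in> A}. - d A) = 0"
      using d by (auto simp: sum_negf)
    obtain b where b: "b > 0" "car_mech E (\<lambda>A. \<pi> A + b * - d A)"
      "{A. A \<subseteq> E \<and> \<pi> A + b * - d A \<noteq> 0} \<subset> {A. A \<subseteq> E \<and> \<pi> A \<noteq> 0}"
      using push[OF fin car d2 \<open>- d B2 < 0\<close>] by blast
    have finS: "finite {A. A \<subseteq> E \<and> \<pi> A \<noteq> 0}" using fin by auto
    obtain L1 where L1: "L1 \<noteq> []" "\<forall>(w,\<sigma>)\<in>set L1. w \<ge> 0 \<and> car_mech E \<sigma> \<and> car_tight E \<sigma>"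
      "sum_list (map fst L1) = 1" "\<forall>A. \<pi> A + a * d A = (\<Sum>(w,\<sigma>)\<leftarrow>L1. w * \<sigma> A)"
      using less.hyps[OF psubset_card_mono[OF finS a(3)] a(2)] by auto
    obtain L2 where L2: "L2 \<noteq> []" "\<forall>(w,\<sigma>)\<in>set L2. w \<ge> 0 \<and> car_mech E \<sigma> \<and> car_tight E \<sigma>"
      "sum_list (map fst L2) = 1" "\<forall>A. \<pi> A + b * - d A = (\<Sum>(w,\<sigma>)\<leftarrow>L2. w * \<sigma> A)"
      using less.hyps[OF psubset_card_mono[OF finS b(3)] b(2)] by auto
    define c where "c = b / (a + b)"
    have c: "0 \<le> c" "0 \<le> 1 - c" using a(1) b(1) by (auto simp: c_def field_simps)
    define L where "L = map (\<lambda>(w,\<sigma>). (c * w, \<sigma>)) L1 @ map (\<lambda>(w,\<sigma>). ((1 - c) * w, \<sigma>)) L2"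
    have "L \<noteq> []" using L1(1) by (simp add: L_def)
    moreover have "\<forall>(w,\<sigma>)\<in>set L. w \<ge> 0 \<and> car_mech E \<sigma> \<and> car_tight E \<sigma>"
      using L1(2) L2(2) c unfolding L_def by fastforce
    moreover have "sum_list (map fst L) = 1"
      unfolding L_def map_append sum_list_append sum_list_scale_fst using L1(3) L2(3) by simp
    moreover have "\<forall>A. \<pi> A = (\<Sum>(w,\<sigma>)\<leftarrow>L. w * \<sigma> A)"
    proof
      fix A
      have "(\<Sum>(w,\<sigma>)\<leftarrow>L. w * \<sigma> A) = c * (\<pi> A + a * d A) + (1 - c) * (\<pi> A + b * - d A)"
        unfolding L_def map_append sum_list_append sum_list_scale using L1(4) L2(4) by simp
      also have "\<dots> = \<pi> A + (c * a - (1 - c) * b) * d A" by (simp add: algebra_simps)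
      also have "c * a - (1 - c) * b = 0" using a(1) b(1) by (simp add: c_def field_simps)
      finally show "\<pi> A = (\<Sum>(w,\<sigma>)\<leftarrow>L. w * \<sigma> A)" by simp
    qed
    ultimately show ?thesis by blast
  qed
qed




lemma common_denom:
  fixes f :: "'b \<Rightarrow> real"
  assumes "finite S" "\<forall>A\<in>S. f A \<in> \<rat>"
  shows "\<exists>D::nat. D > 0 \<and> (\<forall>A\<in>S. real D * f A \<in> \<int>)"
  using assms
proof (induction S rule: finite_induct)
  case empty
  then show ?case by (intro exI[of _ 1]) auto
next
  case (insert a S)
  then obtain D where D: "D > 0" "\<forall>A\<in>S. real D * f A \<in> \<int>" by auto
  have "f a \<in> \<rat>" using insert.prems by auto
  then obtain p q where pq: "q > 0" "f a = of_int p / of_int q" by (elim Rats_cases')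
  define D' where "D' = D * nat q"
  have "D' > 0" using D(1) pq(1) by (simp add: D'_def)
  moreover have "\<forall>A\<in>insert a S. real D' * f A \<in> \<int>"
  proof
    fix A assume "A \<in> insert a S"
    then show "real D' * f A \<in> \<int>"
    proof
      assume "A = a"
      have "real D' * f A = of_int (int D * p)" using pq \<open>A = a\<close> by (simp add: D'_def)
      then show ?thesis by simp
    next
      assume "A \<in> S"
      then have i: "real D * f A \<in> \<int>" using D by auto
      have "real D' = of_int q * real D" using pq(1) by (simp add: D'_def)
      then have "real D' * f A = of_int q * (real D * f A)" by (simp add: mult.assoc)
      then show ?thesis using i by (metis Ints_mult Ints_of_int)
    qed
  qed
  ultimately show ?case by blast
qed

lemma count_rep_sum:
  assumes "finite S"
  shows "count (\<Sum>A\<in>S. replicate_mset (n A) A) B = (if B \<in> S then n B else 0)"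
  using assms by (induction S rule: finite_induct) auto

lemma filter_rep: "size (filter_mset P (replicate_mset m x)) = (if P x then m else 0)"
  by (induction m) auto

lemma size_filter_rep_sum:
  assumes "finite S"
  shows "size (filter_mset P (\<Sum>A\<in>S. replicate_mset (n A) A)) = (\<Sum>A\<in>S. if P A then n A else 0)"
  using assms by (induction S rule: finite_induct) (auto simp: filter_rep)

lemma multicover:
  assumes fin: "finite E" and rc: "rational_car E \<sigma>"
  shows "\<exists>C k. uniform_multicover E C k \<and> \<sigma> = generated_mech C k"
proof -
  have car: "car_mech E \<sigma>" and rat: "\<forall>A. \<sigma> A \<in> \<rat>" using rc unfolding rational_car_def by auto
  obtain D :: nat where D: "D > 0" "\<forall>A\<in>Pow E. real D * \<sigma> A \<in> \<int>"
    using common_denom[of "Pow E" \<sigma>] fin rat by auto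
  define n where "n A = nat \<lfloor>real D * \<sigma> A\<rfloor>" for A
  have nA: "real (n A) = real D * \<sigma> A" if "A \<in> Pow E" for A
  proof -
    have "real D * \<sigma> A \<in> \<int>" using D(2) that by blast
    then obtain m where m: "real D * \<sigma> A = of_int m" by (elim Ints_cases)
    have "0 \<le> real D * \<sigma> A" using car_nonneg[OF car, of A] by simp
    then have "m \<ge> 0" using m by simp
    then show ?thesis unfolding n_def m by simp
  qed
  define C where "C = (\<Sum>A\<in>Pow E. replicate_mset (n A) A)"
  have cnt: "real (count C B) = real D * \<sigma> B" for B
  proof (cases "B \<in> Pow E")
    case True then show ?thesis using nA by (simp add: C_def count_rep_sum fin)
  next
    case False
    then have "\<sigma> B = 0" using car_zero[OF car] by auto
    then show ?thesis using False by (simp add: C_def count_rep_sum fin)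
  qed
  have gen: "\<sigma> = generated_mech C D"
    unfolding generated_mech_def using cnt D(1) by (auto simp: fun_eq_iff)
  have h1: "\<forall>A\<in>#C. A \<subseteq> E \<and> A \<noteq> {}"
  proof
    fix A assume "A \<in># C"
    then have "count C A > 0" by simp
    then have "real (count C A) > 0" by simp
    then have "real D * \<sigma> A \<noteq> 0" using cnt[of A] by linarith
    then have "\<sigma> A \<noteq> 0" by auto
    then show "A \<subseteq> E \<and> A \<noteq> {}" using car_zero[OF car] by blast
  qed
  have h2: "\<forall>x\<in>E. size (filter_mset (\<lambda>A. x \<in> A) C) = D"
  proof
    fix x assume x: "x \<in> E"
    have "real (size (filter_mset (\<lambda>A. x \<in> A) C)) = (\<Sum>A\<in>Pow E. if x \<in> A then real (n A) else 0)"
      unfolding C_def using fin by (simp add: size_filter_rep_sum of_nat_sum) (intro sum.cong, auto)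
    also have "\<dots> = (\<Sum>A\<in>Pow E. if x \<in> A then real D * \<sigma> A else 0)"
      using nA by (intro sum.cong) auto
    also have "\<dots> = (\<Sum>A\<in>{A \<in> Pow E. x \<in> A}. real D * \<sigma> A)"
      using fin by (simp only: sum.inter_filter finite_Pow_iff)
    also have "{A \<in> Pow E. x \<in> A} = {A. A \<subseteq> E \<and> x \<in> A}" by auto
    also have "(\<Sum>A\<in>{A. A \<subseteq> E \<and> x \<in> A}. real D * \<sigma> A) = real D"
      using car_sum[OF car x] by (simp add: sum_distrib_left[symmetric])
    finally show "size (filter_mset (\<lambda>A. x \<in> A) C) = D" by (simp only: of_nat_eq_iff)
  qed
  have "uniform_multicover E C D"
    unfolding uniform_multicover_def using D(1) h1 h2 by blast
  then show ?thesis using gen by blast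
qed



lemma car_comb:
  assumes "\<forall>j<p. car_mech E (\<sigma> j) \<and> w j \<ge> 0" "(\<Sum>j<p. w j) = 1"
  shows "car_mech E (\<lambda>A. \<Sum>j<p. w j * \<sigma> j A)"
  unfolding car_mech_def
proof (intro conjI allI impI ballI)
  fix A show "0 \<le> (\<Sum>j<p. w j * \<sigma> j A)"
  proof (rule sum_nonneg)
    fix j assume "j \<in> {..<p}"
    then have "car_mech E (\<sigma> j)" "0 \<le> w j" using assms(1) by auto
    then show "0 \<le> w j * \<sigma> j A" using car_nonneg[of E "\<sigma> j" A] by simp
  qed
next
  fix A assume nA: "\<not> (A \<subseteq> E \<and> A \<noteq> {})"
  have "\<sigma> j A = 0" if "j < p" for j using assms(1) that car_zero[of E "\<sigma> j" A, OF _ nA] by blast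
  then show "(\<Sum>j<p. w j * \<sigma> j A) = 0"
    by (intro sum.neutral) auto
next
  fix x assume x: "x \<in> E"
  have "(\<Sum>A\<in>{A. A \<subseteq> E \<and> x \<in> A}. \<Sum>j<p. w j * \<sigma> j A)
      = (\<Sum>j<p. w j * (\<Sum>A\<in>{A. A \<subseteq> E \<and> x \<in> A}. \<sigma> j A))"
    by (subst sum.swap) (simp add: sum_distrib_left)
  also have "\<dots> = (\<Sum>j<p. w j)"
  proof (rule sum.cong)
    fix j assume "j \<in> {..<p}"
    then have "car_mech E (\<sigma> j)" using assms(1) by auto
    then show "w j * (\<Sum>A\<in>{A. A \<subseteq> E \<and> x \<in> A}. \<sigma> j A) = w j" using car_sum[OF _ x] by simp
  qed simp
  finally show "(\<Sum>A\<in>{A. A \<subseteq> E \<and> x \<in> A}. \<Sum>j<p. w j * \<sigma> j A) = 1" using assms(2) by simp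
qed

lemma part2:
  assumes fin: "finite E" and car: "car_mech E \<pi>"
  shows "\<exists>(p::nat) (w::nat \<Rightarrow> real) (\<sigma>::nat \<Rightarrow> 'a set \<Rightarrow> real)
                (C::nat \<Rightarrow> 'a set multiset) (k::nat \<Rightarrow> nat).
               p > 0 \<and> (\<forall>j<p. w j \<ge> 0) \<and> (\<Sum>j<p. w j) = 1 \<and>
               (\<forall>j<p. extreme_car E (\<sigma> j) \<and> rational_car E (\<sigma> j) \<and>
                      uniform_multicover E (C j) (k j) \<and>
                      \<sigma> j = generated_mech (C j) (k j)) \<and>
               (\<forall>A. \<pi> A = (\<Sum>j<p. w j * \<sigma> j A))"
proof -
  obtain L where L: "L \<noteq> []" "\<forall>(w,\<sigma>)\<in>set L. w \<ge> 0 \<and> car_mech E \<sigma> \<and> car_tight E \<sigma>"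
     "sum_list (map fst L) = 1" "\<forall>A. \<pi> A = (\<Sum>(w,\<sigma>)\<leftarrow>L. w * \<sigma> A)"
    using decomp[OF fin car] by blast
  define p where "p = length L"
  define w where "w j = fst (L ! j)" for j
  define \<sigma> where "\<sigma> j = snd (L ! j)" for j
  have mem: "(w j, \<sigma> j) \<in> set L" if "j < p" for j
    using that unfolding p_def w_def \<sigma>_def by simp
  have ws: "\<forall>j<p. w j \<ge> 0 \<and> car_mech E (\<sigma> j) \<and> car_tight E (\<sigma> j)"
    using mem L(2) by fastforce
  have ex: "\<forall>j<p. extreme_car E (\<sigma> j) \<and> rational_car E (\<sigma> j)"
    using ws tight_extreme tight_rational[OF fin] unfolding rational_car_def by blast
  have "\<forall>j\<in>{..<p}. \<exists>Ck. uniform_multicover E (fst Ck) (snd Ck) \<and> \<sigma> j = generated_mech (fst Ck) (snd Ck)"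
    using ex multicover[OF fin] by fastforce
  then obtain g where g: "\<forall>j\<in>{..<p}. uniform_multicover E (fst (g j)) (snd (g j)) \<and> \<sigma> j = generated_mech (fst (g j)) (snd (g j))"
    by (metis bchoice)
  have p0: "p > 0" using L(1) unfolding p_def by simp
  have s1: "(\<Sum>j<p. w j) = 1"
    using L(3) unfolding p_def w_def by (simp add: sum_list_sum_nth atLeast0LessThan)
  have s2: "\<forall>A. \<pi> A = (\<Sum>j<p. w j * \<sigma> j A)"
    using L(4) unfolding p_def w_def \<sigma>_def by (simp add: sum_list_sum_nth atLeast0LessThan case_prod_beta)
  show ?thesis
    apply (rule exI[of _ p], rule exI[of _ w], rule exI[of _ \<sigma>], rule exI[of _ "\<lambda>j. fst (g j)"], rule exI[of _ "\<lambda>j. snd (g j)"])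
    using p0 ws ex g s1 s2 by auto
qed

lemma ratapprox:
  fixes w \<delta> :: real
  assumes "w \<ge> 0" "\<delta> > 0"
  shows "\<exists>q\<in>\<rat>. 0 \<le> q \<and> q \<le> w \<and> w - q < \<delta>"
proof (cases "w < \<delta>")
  case True then show ?thesis using assms by (intro bexI[of _ 0]) auto
next
  case False
  then have "w - \<delta> < w" using assms by simp
  then obtain q where "q \<in> \<rat>" "w - \<delta> < q" "q < w" using Rats_dense_in_real by blast
  then show ?thesis using False by (intro bexI[of _ q]) auto
qed


lemma part1:
  fixes E :: "'a set"
  assumes fin: "finite E" and car: "car_mech E \<pi>" and eps: "\<epsilon> > 0"
  shows "\<exists>\<pi>'. rational_car E \<pi>' \<and> car_dist E \<pi> \<pi>' < \<epsilon>"
proof -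
  obtain p :: nat and w :: "nat \<Rightarrow> real" and \<sigma> :: "nat \<Rightarrow> 'a set \<Rightarrow> real"
    and C :: "nat \<Rightarrow> 'a set multiset" and k :: "nat \<Rightarrow> nat" where P: "p > 0" "\<forall>j<p. w j \<ge> 0" "(\<Sum>j<p. w j) = 1"
    "\<forall>j<p. extreme_car E (\<sigma> j) \<and> rational_car E (\<sigma> j) \<and>
                      uniform_multicover E (C j) (k j) \<and>
                      \<sigma> j = generated_mech (C j) (k j)"
    "\<forall>A. \<pi> A = (\<Sum>j<p. w j * \<sigma> j A)"
    using part2[OF fin car] by (elim exE conjE) (rule that; assumption)
  have carj: "car_mech E (\<sigma> j)" and ratj: "\<sigma> j A \<in> \<rat>" if "j < p" for j A
    using P(4) that unfolding rational_car_def by auto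
  define N where "N = card (Pow E)"
  have N0: "N > 0" unfolding N_def using fin by (auto simp: card_gt_0_iff)
  define \<delta> where "\<delta> = \<epsilon> / (2 * real p * real N)"
  have \<delta>0: "\<delta> > 0" unfolding \<delta>_def using eps P(1) N0 by simp
  have "\<forall>j\<in>{..<p}. \<exists>q. q \<in> \<rat> \<and> 0 \<le> q \<and> q \<le> w j \<and> w j - q < \<delta>"
    using ratapprox[OF _ \<delta>0] P(2) by blast
  then obtain q where q: "\<forall>j\<in>{..<p}. q j \<in> \<rat> \<and> 0 \<le> q j \<and> q j \<le> w j \<and> w j - q j < \<delta>"
    by (metis bchoice)
  define r where "r = 1 - (\<Sum>j<p. q j)"
  have r_eq: "r = (\<Sum>j<p. w j - q j)" unfolding r_def using P(3) by (simp add: sum_subtractf)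
  have r0: "r \<ge> 0" unfolding r_eq using q by (intro sum_nonneg) auto
  have rlt: "r < real p * \<delta>"
  proof -
    have "(\<Sum>j<p. w j - q j) < (\<Sum>j<p. \<delta>)"
      using q P(1) by (intro sum_strict_mono) auto
    then show ?thesis unfolding r_eq by simp
  qed
  have rQ: "r \<in> \<rat>" unfolding r_def using q by (intro Rats_diff Rats_sum) auto
  define q' where "q' j = q j + (if j = 0 then r else 0)" for j
  have q'0: "\<forall>j<p. q' j \<ge> 0" using q r0 unfolding q'_def by auto
  have q's: "(\<Sum>j<p. q' j) = 1"
    unfolding q'_def using P(1) by (simp add: sum.distrib r_def)
  define \<pi>' where "\<pi>' A = (\<Sum>j<p. q' j * \<sigma> j A)" for A
  have car': "car_mech E \<pi>'"
    unfolding \<pi>'_def using car_comb[of p E \<sigma> q'] carj q'0 q's by blast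
  have rat': "\<pi>' A \<in> \<rat>" for A
    unfolding \<pi>'_def q'_def using q rQ ratj by (intro Rats_sum Rats_mult Rats_add) auto
  have absq: "(\<Sum>j<p. \<bar>w j - q' j\<bar>) \<le> 2 * r"
  proof -
    have "(\<Sum>j<p. \<bar>w j - q' j\<bar>) \<le> (\<Sum>j<p. (w j - q j) + (if j = 0 then r else 0))"
    proof (rule sum_mono)
      fix j assume "j \<in> {..<p}"
      then have "q j \<le> w j" using q by auto
      then show "\<bar>w j - q' j\<bar> \<le> (w j - q j) + (if j = 0 then r else 0)"
        using r0 unfolding q'_def by (auto simp: abs_le_iff)
    qed
    also have "\<dots> = r + r" using P(1) by (simp add: sum.distrib r_eq)
    finally show ?thesis by simp
  qed
  have "car_dist E \<pi> \<pi>' = (\<Sum>A\<in>Pow E. \<bar>\<Sum>j<p. (w j - q' j) * \<sigma> j A\<bar>)"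
    unfolding car_dist_def \<pi>'_def P(5)[rule_format]
    by (simp add: sum_subtractf left_diff_distrib)
  also have "\<dots> \<le> (\<Sum>A\<in>Pow E. \<Sum>j<p. \<bar>w j - q' j\<bar>)"
  proof (rule sum_mono)
    fix A
    have "\<bar>\<Sum>j<p. (w j - q' j) * \<sigma> j A\<bar> \<le> (\<Sum>j<p. \<bar>(w j - q' j) * \<sigma> j A\<bar>)"
      by (rule sum_abs)
    also have "\<dots> \<le> (\<Sum>j<p. \<bar>w j - q' j\<bar>)"
    proof (rule sum_mono)
      fix j assume "j \<in> {..<p}"
      then have "0 \<le> \<sigma> j A" "\<sigma> j A \<le> 1" using carj car_nonneg car_le1[OF fin] by auto
      then show "\<bar>(w j - q' j) * \<sigma> j A\<bar> \<le> \<bar>w j - q' j\<bar>"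
        by (simp add: abs_mult mult_left_le)
    qed
    finally show "\<bar>\<Sum>j<p. (w j - q' j) * \<sigma> j A\<bar> \<le> (\<Sum>j<p. \<bar>w j - q' j\<bar>)" .
  qed
  also have "\<dots> = real N * (\<Sum>j<p. \<bar>w j - q' j\<bar>)" by (simp add: N_def)
  also have "\<dots> \<le> real N * (2 * r)" using absq N0 by (intro mult_left_mono) auto
  also have "\<dots> < real N * (2 * (real p * \<delta>))" using rlt N0 by simp
  also have "\<dots> = \<epsilon>" unfolding \<delta>_def using N0 P(1) by simp
  finally show ?thesis using car' rat' unfolding rational_car_def by blast
qed

theorem theorem2:
  fixes E :: "'a set"
  assumes "finite E" and "E \<noteq> {}"
  shows "(\<forall>\<pi> \<epsilon>. car_mech E \<pi> \<and> \<epsilon> > 0 \<longrightarrow>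
            (\<exists>\<pi>'. rational_car E \<pi>' \<and> car_dist E \<pi> \<pi>' < \<epsilon>))
       \<and> (\<forall>\<pi>. car_mech E \<pi> \<longrightarrow>
            (\<exists>(p::nat) (w::nat \<Rightarrow> real) (\<sigma>::nat \<Rightarrow> 'a set \<Rightarrow> real)
                (C::nat \<Rightarrow> 'a set multiset) (k::nat \<Rightarrow> nat).
               p > 0 \<and> (\<forall>j<p. w j \<ge> 0) \<and> (\<Sum>j<p. w j) = 1 \<and>
               (\<forall>j<p. extreme_car E (\<sigma> j) \<and> rational_car E (\<sigma> j) \<and>
                      uniform_multicover E (C j) (k j) \<and>
                      \<sigma> j = generated_mech (C j) (k j)) \<and>
               (\<forall>A. \<pi> A = (\<Sum>j<p. w j * \<sigma> j A))))"
  using part1[OF assms(1)] part2[OF assms(1)] by blast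

end
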